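(* Let $n\ge 2$ and let $\mathsf u$ be a subword of $\bm\lambda_n$ with $u_1u_2\cdots u_{n(n-1)}=e$. Then $\operatorname{rot}(\mathsf u)$ also satisfies $\operatorname{rot}(\mathsf u)_1\cdots\operatorname{rot}(\mathsf u)_{n(n-1)}=e$.
   Context: $\widetilde S_n$ is the affine symmetric group (bijections $w:\mathbb Z\to\mathbb Z$ with $w(i+n)=w(i)+n$ and $\sum_{i=1}^nw(i)=\binom{n+1}2$, under composition), with simple reflections $s_i=(\!(i,i+1)\!)$ for $i\in\{0,\dots,n-1\}$, where $(\!(i,j)\!)$ swaps $i+kn$ and $j+kn$ for all $k\in\mathbb Z$. $\bm\lambda_n$ is the word $[s_0,s_1,\dots,s_{n-1}]$ repeated $n-1$ times; its $j$-th letter ($1\le j\le n(n-1)$) is $\sigma_j=s_{(j-1)\bmod n}$ with index in $\{0,\dots,n-1\}$. A subword is a sequence $\mathsf u=[u_1,\dots,u_{n(n-1)}]$ with each $u_j\in\{\sigma_j,e\}$ ($e$ the identity). The rotation $\operatorname{rot}(\mathsf u)$ is the subword whose $j$-th entry is $e$ if and only if the $(j-1)$-th entry of $\mathsf u$ is $e$, with indices taken cyclically modulo $n(n-1)$ (so the first entry of $\operatorname{rot}(\mathsf u)$ is a skip iff $u_{n(n-1)}=e$). *)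

theory Defs
  imports Main
begin

text \<open>Elements of the affine
  symmetric group are represented as functions int => int; the group product is
  function composition and the identity e is id.\<close>
definition srefl :: "nat \<Rightarrow> nat \<Rightarrow> int \<Rightarrow> int" where
  "srefl n i x =
     (if x mod int n = int i mod int n then x + 1
      else if x mod int n = (int i + 1) mod int n then x - 1
      else x)"

definition lam_letter :: "nat \<Rightarrow> nat \<Rightarrow> int \<Rightarrow> int" where
  "lam_letter n j = srefl n ((j - 1) mod n)"

definition is_subword :: "nat \<Rightarrow> (nat \<Rightarrow> int \<Rightarrow> int) \<Rightarrow> bool" where
  "is_subword n u \<longleftrightarrow> (\<forall>j\<in>{1..n*(n-1)}. u j = lam_letter n j \<or> u j = id)"

definition word_prod :: "nat \<Rightarrow> (nat \<Rightarrow> int \<Rightarrow> int) \<Rightarrow> int \<Rightarrow> int" where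
  "word_prod m u = foldr (\<circ>) (map u [1..<m+1]) id"

definition rot :: "nat \<Rightarrow> (nat \<Rightarrow> int \<Rightarrow> int) \<Rightarrow> nat \<Rightarrow> int \<Rightarrow> int" where
  "rot n u j = (let N = n * (n - 1); p = (if j = 1 then N else j - 1)
                in if u p = id then id else lam_letter n j)"

end

theory Submission
  imports Defs
begin

definition tauf :: "int \<Rightarrow> int" where "tauf x = x + 1"
definition tauf' :: "int \<Rightarrow> int" where "tauf' x = x - 1"

lemma srefl_cong:
  assumes "int a mod int n = int b mod int n"
  shows "srefl n a = srefl n b"
proof -
  have "(int a + 1) mod int n = (int b + 1) mod int n"
    using mod_add_cong[OF assms, of 1 1] by simp
  thus ?thesis using assms by (auto simp: srefl_def fun_eq_iff)
qed

lemma modsh: "((a::int) mod m = b mod m) = ((a - c) mod m = (b - c) mod m)"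
  using mod_diff_cong[of a m b c c] mod_add_cong[of "a-c" m "b-c" c c] by auto

lemma srefl_conj: "srefl n (Suc i) = tauf \<circ> srefl n i \<circ> tauf'"
proof
  fix x
  have e1: "(x mod int n = (int i + 1) mod int n) = ((x - 1) mod int n = int i mod int n)"
    using modsh[of x "int n" "int i + 1" 1] by simp
  have e2: "(x mod int n = (int i + 1 + 1) mod int n) = ((x - 1) mod int n = (int i + 1) mod int n)"
    using modsh[of x "int n" "int i + 1 + 1" 1] by (simp only: add_diff_cancel_right')
  show "srefl n (Suc i) x = (tauf \<circ> srefl n i \<circ> tauf') x"
    using e1 e2 by (simp add: srefl_def tauf_def tauf'_def add.commute[of 1] add.commute[of 2])
qed

lemma srefl_inv:
  assumes "n \<ge> 2"
  shows "srefl n i (srefl n i x) = x"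
proof -
  have ne: "(int i + 1) mod int n \<noteq> int i mod int n"
  proof
    assume "(int i + 1) mod int n = int i mod int n"
    hence "int n dvd (int i + 1) - int i" by (metis mod_eq_dvd_iff)
    hence "int n dvd 1" by simp
    thus False using assms by simp
  qed
  show ?thesis
  proof (cases "x mod int n = int i mod int n")
    case True
    hence "(x + 1) mod int n = (int i + 1) mod int n" using mod_add_cong[OF True, of 1 1] by simp
    thus ?thesis using True ne by (simp add: srefl_def)
  next
    case False
    note F = False
    show ?thesis
    proof (cases "x mod int n = (int i + 1) mod int n")
      case True
      hence "(x - 1) mod int n = int i mod int n"
        using mod_diff_cong[OF True, of 1 1] by simp
      thus ?thesis using True F by (simp add: srefl_def)
    next
      case False
      thus ?thesis using F by (simp add: srefl_def)
    qed
  qed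
qed

lemma foldr_comp_init: "foldr (\<circ>) fs g = foldr (\<circ>) fs id \<circ> g"
  by (induction fs) (auto simp: comp_assoc)

lemma foldr_conj:
  "foldr (\<circ>) (map (\<lambda>j. tauf \<circ> f j \<circ> tauf') xs) id = tauf \<circ> foldr (\<circ>) (map f xs) id \<circ> tauf'"
proof (induction xs)
  case Nil
  then show ?case by (auto simp: fun_eq_iff tauf_def tauf'_def)
next
  case (Cons a xs)
  show ?case using Cons.IH by (simp add: fun_eq_iff tauf_def tauf'_def)
qed

theorem lemma5p6:
  fixes n :: nat and u :: "nat \<Rightarrow> int \<Rightarrow> int"
  assumes "n \<ge> 2"
    and "is_subword n u"
    and "word_prod (n * (n - 1)) u = id"
  shows "is_subword n (rot n u) \<and> word_prod (n * (n - 1)) (rot n u) = id"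
proof -
  define N where "N = n * (n - 1)"
  define p where "p j = (if j = 1 then N else j - 1)" for j :: nat
  have N2: "N \<ge> 2" unfolding N_def using assms(1)
    using mult_le_mono[of 2 n 1 "n - 1"] by simp
  have rotj: "rot n u j = (if u (p j) = id then id else lam_letter n j)" for j
    by (simp add: rot_def p_def N_def Let_def)
  have sub: "is_subword n (rot n u)"
    unfolding is_subword_def rotj by auto
  have letter: "lam_letter n j = tauf \<circ> lam_letter n (p j) \<circ> tauf'" if "j \<in> {1..N}" for j
  proof (cases "j = 1")
    case True
    have "(N - 1) mod n = n - 1"
    proof -
      obtain m where mm: "n = m + 2" using assms(1) by (metis le_add_diff_inverse2)
      hence "n * (n - 1) - 1 = m * n + (n - 1)" by (simp add: algebra_simps)
      hence "(n * (n - 1) - 1) mod n = (n - 1) mod n" by simp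
      thus ?thesis using mm by (simp add: N_def)
    qed
    hence "lam_letter n (p j) = srefl n (n - 1)"
      using True by (simp add: lam_letter_def p_def)
    hence "tauf \<circ> lam_letter n (p j) \<circ> tauf' = srefl n (Suc (n - 1))"
      by (simp add: srefl_conj)
    also have "\<dots> = srefl n 0"
      using assms(1) by (intro srefl_cong) simp
    finally show ?thesis using True by (simp add: lam_letter_def)
  next
    case False
    with that have j2: "j \<ge> 2" by auto
    have "tauf \<circ> lam_letter n (p j) \<circ> tauf' = srefl n (Suc ((j - 2) mod n))"
      using False by (simp add: lam_letter_def p_def srefl_conj numeral_2_eq_2)
    also have "\<dots> = srefl n ((j - 1) mod n)"
    proof (rule srefl_cong)
      have "Suc ((j - 2) mod n) mod n = (j - 1) mod n"
      proof -
        have "j - 1 = Suc (j - 2)" using j2 by simp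
        thus ?thesis by (simp add: mod_Suc_eq)
      qed
      thus "int (Suc ((j - 2) mod n)) mod int n = int ((j - 1) mod n) mod int n"
        by (simp only: zmod_int[symmetric] mod_mod_trivial)
    qed
    finally show ?thesis by (simp add: lam_letter_def)
  qed
  have rconj: "rot n u j = tauf \<circ> u (p j) \<circ> tauf'" if "j \<in> {1..N}" for j
  proof -
    have "p j \<in> {1..N}" using that N2 by (auto simp: p_def)
    hence "u (p j) = lam_letter n (p j) \<or> u (p j) = id"
      using assms(2) by (auto simp: is_subword_def N_def)
    thus ?thesis
    proof
      assume h: "u (p j) = lam_letter n (p j)"
      show ?thesis
      proof (cases "u (p j) = id")
        case True
        thus ?thesis using rotj[of j] by (simp add: fun_eq_iff tauf_def tauf'_def)
      next
        case False
        thus ?thesis using rotj[of j] letter[OF that] h by simp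
      qed
    next
      assume h: "u (p j) = id"
      thus ?thesis using rotj[of j] by (simp add: fun_eq_iff tauf_def tauf'_def)
    qed
  qed
  define A where "A = foldr (\<circ>) (map u [1..<N]) id"
  have up: "[1..<N+1] = [1..<N] @ [N]" using N2 by simp
  have AuN: "A \<circ> u N = id"
    using assms(3) unfolding word_prod_def N_def[symmetric] A_def up
    by (simp add: foldr_comp_init[of _ "u N"])
  have uNN: "u N \<circ> u N = id"
  proof -
    have "N \<in> {1..N}" using N2 by auto
    hence "u N = lam_letter n N \<or> u N = id"
      using assms(2) by (auto simp: is_subword_def N_def)
    thus ?thesis using srefl_inv[OF assms(1)]
      by (auto simp: fun_eq_iff lam_letter_def)
  qed
  have uNA: "u N \<circ> A = id"
  proof -
    have "u N \<circ> A = u N \<circ> A \<circ> (u N \<circ> u N)" using uNN by simp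
    also have "\<dots> = u N \<circ> (A \<circ> u N) \<circ> u N" by (simp add: comp_assoc)
    also have "\<dots> = id" using AuN uNN by simp
    finally show ?thesis .
  qed
  have mp: "map p [1..<N+1] = N # [1..<N]"
  proof -
    have "[1..<N+1] = 1 # [2..<N+1]" using N2 by (simp add: upt_conv_Cons numeral_2_eq_2)
    moreover have "map p [2..<N+1] = [1..<N]"
      by (rule nth_equalityI) (auto simp: p_def nth_upt simp del: upt_Suc)
    ultimately show ?thesis by (simp add: p_def)
  qed
  have "word_prod N (rot n u) = foldr (\<circ>) (map (\<lambda>j. tauf \<circ> u (p j) \<circ> tauf') [1..<N+1]) id"
    unfolding word_prod_def using rconj by (intro arg_cong[where f="\<lambda>l. foldr (\<circ>) l id"] map_cong) auto
  also have "\<dots> = tauf \<circ> foldr (\<circ>) (map (u \<circ> p) [1..<N+1]) id \<circ> tauf'"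
    using foldr_conj[of "u \<circ> p"] by simp
  also have "\<dots> = tauf \<circ> (u N \<circ> A) \<circ> tauf'"
    using mp by (simp add: A_def map_map[symmetric])
  also have "\<dots> = id" using uNA by (auto simp: fun_eq_iff tauf_def tauf'_def)
  finally show ?thesis using sub by (simp add: N_def)
qed

end
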